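(* The function $\check J$ is coercive on $\mathcal M_T$: $\check J(\Sigma_{\rho_0},\dots,\Sigma_{\rho_{T-1}})\to\infty$ as $\|\Sigma_{\rho_k}\|\to\infty$ for any $k\in\{0,\dots,T-1\}$.
   Context: Fix integers $n,m,T\ge 1$, a scalar $\varepsilon>0$, matrices $A_k\in\mathbb R^{n\times n}$, $B_k\in\mathbb R^{n\times m}$ ($k=0,\dots,T-1$), and symmetric positive definite matrices $R_k\in\mathbb R^{m\times m}$, $\Sigma_{w_k}\in\mathbb R^{n\times n}$ ($k=0,\dots,T-1$), $F,\Sigma_{x_{\mathrm{ini}}}\in\mathbb R^{n\times n}$. Let $\mathcal M_T=(\mathbb S^m_{\succeq 0})^T$ with $\mathbb S^m_{\succeq0}$ the symmetric PSD $m\times m$ matrices; $\|\cdot\|$ the Frobenius norm; $\Sigma^{1/2}$ the PSD square root, $|\cdot|$ the determinant. For $(\Sigma_{\rho_0},\dots,\Sigma_{\rho_{T-1}})\in\mathcal M_T$ define backwards $\Pi_T=F$, $C_k=(R_k+B_k^\top\Pi_{k+1}B_k)/\varepsilon$, $\Pi_k=A_k^\top\Pi_{k+1}A_k-\frac1\varepsilon A_k^\top\Pi_{k+1}B_k\Sigma_{\rho_k}^{1/2}(I+\Sigma_{\rho_k}^{1/2}C_k\Sigma_{\rho_k}^{1/2})^{-1}\Sigma_{\rho_k}^{1/2}B_k^\top\Pi_{k+1}A_k$, $\Sigma_{Q_k}=\varepsilon(R_k+B_k^\top\Pi_{k+1}B_k)^{-1}$, and $\check J(\Sigma_{\rho_0},\dots,\Sigma_{\rho_{T-1}})=\frac12\Big[\mathrm{Tr}(\Pi_0\Sigma_{x_{\mathrm{ini}}})+\sum_{k=0}^{T-1}\Big(\varepsilon\log\frac{|\Sigma_{\rho_k}+\Sigma_{Q_k}|}{|\Sigma_{Q_k}|}+\mathrm{Tr}(\Pi_{k+1}\Sigma_{w_k})\Big)\Big]$.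 *)

theory Defs
  imports "HOL-Analysis.Analysis"
begin

definition psd :: "real^'m^'m \<Rightarrow> bool" where
  "psd S \<longleftrightarrow> transpose S = S \<and> (\<forall>x. 0 \<le> x \<bullet> (S *v x))"

definition posdef :: "real^'m^'m \<Rightarrow> bool" where
  "posdef S \<longleftrightarrow> transpose S = S \<and> (\<forall>x. x \<noteq> 0 \<longrightarrow> 0 < x \<bullet> (S *v x))"

definition psd_sqrt :: "real^'m^'m \<Rightarrow> real^'m^'m" where
  "psd_sqrt S = (THE X. psd X \<and> X ** X = S)"

definition Pi_step ::
  "real \<Rightarrow> real^'n^'n \<Rightarrow> real^'m^'n \<Rightarrow> real^'m^'m \<Rightarrow> real^'m^'m \<Rightarrow> real^'n^'n \<Rightarrow> real^'n^'n" where
  "Pi_step eps Ak Bk Rk Srho P =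
     (let C = (1/eps) *\<^sub>R (Rk + transpose Bk ** P ** Bk);
          S = psd_sqrt Srho
      in transpose Ak ** P ** Ak
         - (1/eps) *\<^sub>R (transpose Ak ** P ** Bk ** S ** matrix_inv (mat 1 + S ** C ** S)
                          ** S ** transpose Bk ** P ** Ak))"

text \<open>Auxiliary: Pi_aux j = Pi_{T-j} (j backward steps from Pi_T = F).\<close>
fun Pi_aux ::
  "nat \<Rightarrow> real \<Rightarrow> (nat \<Rightarrow> real^'n^'n) \<Rightarrow> (nat \<Rightarrow> real^'m^'n) \<Rightarrow> (nat \<Rightarrow> real^'m^'m)
    \<Rightarrow> real^'n^'n \<Rightarrow> (nat \<Rightarrow> real^'m^'m) \<Rightarrow> nat \<Rightarrow> real^'n^'n" where
  "Pi_aux T eps A B R F Srho 0 = F"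
| "Pi_aux T eps A B R F Srho (Suc j) =
     Pi_step eps (A (T - Suc j)) (B (T - Suc j)) (R (T - Suc j)) (Srho (T - Suc j))
             (Pi_aux T eps A B R F Srho j)"

definition Pi_mat ::
  "nat \<Rightarrow> real \<Rightarrow> (nat \<Rightarrow> real^'n^'n) \<Rightarrow> (nat \<Rightarrow> real^'m^'n) \<Rightarrow> (nat \<Rightarrow> real^'m^'m)
    \<Rightarrow> real^'n^'n \<Rightarrow> (nat \<Rightarrow> real^'m^'m) \<Rightarrow> nat \<Rightarrow> real^'n^'n" where
  "Pi_mat T eps A B R F Srho k = Pi_aux T eps A B R F Srho (T - k)"

definition Sigma_Q ::
  "nat \<Rightarrow> real \<Rightarrow> (nat \<Rightarrow> real^'n^'n) \<Rightarrow> (nat \<Rightarrow> real^'m^'n) \<Rightarrow> (nat \<Rightarrow> real^'m^'m)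
    \<Rightarrow> real^'n^'n \<Rightarrow> (nat \<Rightarrow> real^'m^'m) \<Rightarrow> nat \<Rightarrow> real^'m^'m" where
  "Sigma_Q T eps A B R F Srho k =
     eps *\<^sub>R matrix_inv (R k + transpose (B k) ** Pi_mat T eps A B R F Srho (Suc k) ** B k)"

definition J_check ::
  "nat \<Rightarrow> real \<Rightarrow> (nat \<Rightarrow> real^'n^'n) \<Rightarrow> (nat \<Rightarrow> real^'m^'n) \<Rightarrow> (nat \<Rightarrow> real^'m^'m)
    \<Rightarrow> (nat \<Rightarrow> real^'n^'n) \<Rightarrow> real^'n^'n \<Rightarrow> real^'n^'n \<Rightarrow> (nat \<Rightarrow> real^'m^'m) \<Rightarrow> real" where
  "J_check T eps A B R Sw F Sx Srho =
     (1/2) * (trace (Pi_mat T eps A B R F Srho 0 ** Sx)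
       + (\<Sum>k<T. eps * ln (det (Srho k + Sigma_Q T eps A B R F Srho k)
                            / det (Sigma_Q T eps A B R F Srho k))
                 + trace (Pi_mat T eps A B R F Srho (Suc k) ** Sw k)))"

end

theory Submission
  imports Defs
begin

lemma symm_inner:
  fixes A :: "real^'n^'n"
  assumes "transpose A = A"
  shows "x \<bullet> (A *v y) = (A *v x) \<bullet> y"
  by (metis assms dot_lmul_matrix transpose_matrix_vector)

lemma qf_scale:
  fixes A :: "real^'n^'n"
  shows "(c *\<^sub>R x) \<bullet> (A *v (c *\<^sub>R x)) = c^2 * (x \<bullet> (A *v x))"
  by (simp add: matrix_vector_mult_scaleR power2_eq_square)

lemma eig_exists:
  fixes A :: "real^'n^'n"
  assumes sym: "transpose A = A" and V: "subspace V"
    and inv: "\<And>x. x \<in> V \<Longrightarrow> A *v x \<in> V" and ne: "x0 \<in> V" "x0 \<noteq> 0"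
  shows "\<exists>v\<in>V. norm v = 1 \<and> A *v v = (v \<bullet> (A *v v)) *\<^sub>R v"
proof -
  let ?K = "V \<inter> sphere 0 1"
  let ?f = "\<lambda>v. v \<bullet> (A *v v)"
  have cK: "compact ?K"
    by (simp add: V closed_subspace compact_Int_closed compact_sphere inf_commute closed_Int_compact)
  have neK: "?K \<noteq> {}"
  proof -
    have "x0 /\<^sub>R norm x0 \<in> ?K" using ne V by (simp add: subspace_scale)
    then show ?thesis by blast
  qed
  have coK: "continuous_on ?K ?f"
  proof -
    have "continuous_on UNIV ((*v) A)"
      by (metis linear_continuous_on linear_linear matrix_vector_mul_linear)
    then show ?thesis
      by (rule continuous_on_inner[OF continuous_on_id continuous_on_subset]) auto
  qed
  obtain v0 where v0K: "v0 \<in> ?K" and mx: "\<And>y. y \<in> ?K \<Longrightarrow> ?f y \<le> ?f v0"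
    using continuous_attains_sup[OF cK neK coK] by blast
  define l where "l = ?f v0"
  define r where "r = A *v v0 - l *\<^sub>R v0"
  have v0V: "v0 \<in> V" and nv0: "norm v0 = 1" using v0K by auto
  have vv: "v0 \<bullet> v0 = 1" using nv0 by (simp add: dot_square_norm)
  have rV: "r \<in> V" unfolding r_def using V inv v0V by (simp add: subspace_diff subspace_scale)
  have rv0: "r \<bullet> v0 = 0"
  proof -
    have "r \<bullet> v0 = v0 \<bullet> r" by (rule inner_commute)
    also have "\<dots> = 0" unfolding r_def l_def by (simp add: inner_diff_right vv)
    finally show ?thesis .
  qed
  have rA: "r \<bullet> (A *v v0) = r \<bullet> r"
  proof -
    have "A *v v0 = r + l *\<^sub>R v0" by (simp add: r_def)
    then show ?thesis by (simp add: inner_add_right rv0)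
  qed
  have r0: "r = 0"
  proof (rule ccontr)
    assume "r \<noteq> 0"
    hence rp: "r \<bullet> r > 0" by simp
    define rho where "rho = r \<bullet> (A *v r)"
    have dpos: "0 < \<bar>l\<bar> * (r \<bullet> r) + \<bar>rho\<bar> + 1"
    proof -
      have "0 \<le> \<bar>l\<bar> * (r \<bullet> r)" by simp
      then show ?thesis by linarith
    qed
    define t where "t = (r \<bullet> r) / (\<bar>l\<bar> * (r \<bullet> r) + \<bar>rho\<bar> + 1)"
    have tp: "t > 0" unfolding t_def using rp dpos by simp
    define u where "u = v0 + t *\<^sub>R r"
    have uu: "u \<bullet> u = 1 + t^2 * (r \<bullet> r)"
    proof -
      have "v0 \<bullet> r = 0" using rv0 by (simp add: inner_commute)
      then show ?thesis
        unfolding u_def by (simp add: inner_add_left inner_add_right vv rv0 power2_eq_square)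
    qed
    have fu: "?f u = l + 2 * t * (r \<bullet> r) + t^2 * rho"
    proof -
      have "v0 \<bullet> (A *v r) = r \<bullet> (A *v v0)"
        using symm_inner[OF sym, of v0 r] by (simp add: inner_commute)
      then show ?thesis
        unfolding u_def rho_def l_def
        by (simp add: matrix_vector_right_distrib matrix_vector_mult_scaleR inner_add_left inner_add_right rA power2_eq_square algebra_simps)
    qed
    have "u \<bullet> u > 0" using uu rp by (simp add: add_pos_nonneg)
    hence un: "norm u > 0" by auto
    have "u /\<^sub>R norm u \<in> ?K"
      using un V v0V rV by (simp add: u_def subspace_add subspace_scale)
    hence "?f (u /\<^sub>R norm u) \<le> l" using mx l_def by blast
    hence "(1 / norm u)^2 * ?f u \<le> l" using qf_scale[of "1/norm u" u A] by (simp only: inverse_eq_divide)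
    moreover have "(norm u)^2 = u \<bullet> u" by (simp add: dot_square_norm)
    ultimately have "?f u \<le> l * (u \<bullet> u)"
      using un by (simp add: field_simps power2_eq_square)
    hence "l + 2 * t * (r \<bullet> r) + t^2 * rho \<le> l * (1 + t^2 * (r \<bullet> r))" using fu uu by simp
    hence "2 * t * (r \<bullet> r) \<le> t * (t * (l * (r \<bullet> r) - rho))" by (simp add: algebra_simps power2_eq_square)
    hence a: "2 * (r \<bullet> r) \<le> t * (l * (r \<bullet> r) - rho)" using tp by simp
    have "t * (l * (r \<bullet> r) - rho) \<le> t * (\<bar>l\<bar> * (r \<bullet> r) + \<bar>rho\<bar>)"
    proof -
      have "l * (r \<bullet> r) \<le> \<bar>l\<bar> * (r \<bullet> r)" using rp by (intro mult_right_mono) auto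
      moreover have "- rho \<le> \<bar>rho\<bar>" by simp
      ultimately show ?thesis using tp by (intro mult_left_mono) auto
    qed
    also have "\<dots> < r \<bullet> r"
    proof -
      have "t * (\<bar>l\<bar> * (r \<bullet> r) + \<bar>rho\<bar>) < t * (\<bar>l\<bar> * (r \<bullet> r) + \<bar>rho\<bar> + 1)" using tp by simp
      also have "\<dots> = r \<bullet> r" unfolding t_def using dpos by (simp add: field_simps)
      finally show ?thesis .
    qed
    finally show False using a rp by simp
  qed
  have e: "A *v v0 = l *\<^sub>R v0" using r0 by (simp add: r_def)
  have e': "A *v v0 = (v0 \<bullet> (A *v v0)) *\<^sub>R v0" using e unfolding l_def .
  show ?thesis using v0V nv0 e' by blast
qed


definition dg :: "('n \<Rightarrow> real) \<Rightarrow> real^'n^'n" where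
  "dg d = (\<chi> i j. if i = j then d i else 0)"
lemma dg_right: fixes M :: "real^'n^'n" shows "(M ** dg d)$i$j = M$i$j * d j"
proof -
  have "(M ** dg d)$i$j = (\<Sum>k\<in>UNIV. M$i$k * (if k = j then d k else 0))"
    by (simp add: matrix_matrix_mult_def dg_def)
  also have "\<dots> = (\<Sum>k\<in>UNIV. if k = j then M$i$k * d k else 0)" by (rule sum.cong) auto
  also have "\<dots> = M$i$j * d j" by simp
  finally show ?thesis .
qed
lemma dg_left: fixes M :: "real^'n^'n" shows "(dg d ** M)$i$j = d i * M$i$j"
proof -
  have "(dg d ** M)$i$j = (\<Sum>k\<in>UNIV. (if i = k then d i else 0) * M$k$j)"
    by (simp add: matrix_matrix_mult_def dg_def)
  also have "\<dots> = (\<Sum>k\<in>UNIV. if i = k then d i * M$k$j else 0)" by (rule sum.cong) auto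
  also have "\<dots> = d i * M$i$j" by simp
  finally show ?thesis .
qed
lemma dg_vec: "(dg d *v x)$i = d i * x$i"
proof -
  have "(dg d *v x)$i = (\<Sum>k\<in>UNIV. (if i = k then d i else 0) * x$k)"
    by (simp add: matrix_vector_mult_def dg_def)
  also have "\<dots> = (\<Sum>k\<in>UNIV. if i = k then d i * x$k else 0)" by (rule sum.cong) auto
  also have "\<dots> = d i * x$i" by simp
  finally show ?thesis .
qed
lemma dg_mult: "dg d ** dg e = dg (\<lambda>i. d i * e i)"
  by (simp add: vec_eq_iff dg_left) (simp add: dg_def)
lemma dg_transpose: "transpose (dg d) = dg d"
  by (simp add: vec_eq_iff transpose_def dg_def)
lemma dg_det: "det (dg d) = (\<Prod>i\<in>UNIV. d i)"
  by (subst det_diagonal) (simp_all add: dg_def)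
lemma dg_add: "dg d + dg e = dg (\<lambda>i. d i + e i)"
  by (simp add: vec_eq_iff dg_def)
lemma dg_mat: "mat c = dg (\<lambda>_. c)"
  by (simp add: vec_eq_iff dg_def mat_def)
lemma dg_trace: "trace (dg d) = (\<Sum>i\<in>UNIV. d i)"
  by (simp add: trace_def dg_def)
lemma dg_zero: "dg (\<lambda>_. 0) = 0"
  by (simp add: vec_eq_iff dg_def)

lemma orth_eigs:
  fixes A :: "real^'n^'n"
  assumes sym: "transpose A = A"
  shows "k \<le> CARD('n) \<Longrightarrow> \<exists>S. finite S \<and> card S = k \<and>
           (\<forall>s\<in>S. norm s = 1 \<and> A *v s = (s \<bullet> (A *v s)) *\<^sub>R s) \<and> pairwise orthogonal S"
proof (induction k)
  case 0
  show ?case by (intro exI[of _ "{}"]) auto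
next
  case (Suc k)
  have "k \<le> CARD('n)" using Suc.prems by simp
  from Suc.IH[OF this] obtain S where S: "finite S" "card S = k"
    "\<forall>s\<in>S. norm s = 1 \<and> A *v s = (s \<bullet> (A *v s)) *\<^sub>R s" "pairwise orthogonal S"
    by blast
  have "dim S < DIM(real^'n)" using dim_le_card'[OF S(1)] S(2) Suc.prems by simp
  then obtain x where x: "x \<noteq> 0" "\<And>y. y \<in> span S \<Longrightarrow> orthogonal x y"
    using orthogonal_to_subspace_exists by blast
  let ?V = "{y. \<forall>s\<in>S. orthogonal s y}"
  have subV: "subspace ?V" by (rule subspace_orthogonal_to_vectors)
  have invV: "A *v y \<in> ?V" if y: "y \<in> ?V" for y
  proof -
    { fix s assume s: "s \<in> S"
      have "s \<bullet> (A *v y) = (A *v s) \<bullet> y" by (rule symm_inner[OF sym])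
      also have "\<dots> = (s \<bullet> (A *v s)) * (s \<bullet> y)"
      proof -
        from bspec[OF S(3) s] have ev: "A *v s = (s \<bullet> (A *v s)) *\<^sub>R s" by (rule conjunct2)
        have "(A *v s) \<bullet> y = ((s \<bullet> (A *v s)) *\<^sub>R s) \<bullet> y" by (subst ev) (rule refl)
        then show ?thesis by (simp only: inner_scaleR_left)
      qed
      also have "\<dots> = 0" using y s by (simp add: orthogonal_def)
      finally have "orthogonal s (A *v y)" by (simp add: orthogonal_def) }
    then show "A *v y \<in> ?V" by auto
  qed
  have xV: "x \<in> ?V"
  proof -
    { fix s assume "s \<in> S"
      then have "orthogonal x s" using x(2) span_base by blast
      then have "orthogonal s x" by (simp add: orthogonal_def inner_commute) }
    then show ?thesis by blast
  qed
  obtain v where v: "v \<in> ?V" "norm v = 1" "A *v v = (v \<bullet> (A *v v)) *\<^sub>R v"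
    using eig_exists[OF sym subV invV xV x(1)] by blast
  have vS: "v \<notin> S"
  proof
    assume "v \<in> S"
    then have "v \<bullet> v = 0" using v(1) by (simp add: orthogonal_def)
    then show False using v(2) by (simp add: norm_eq_1)
  qed
  show ?case
  proof (intro exI[of _ "insert v S"] conjI)
    show "finite (insert v S)" using S(1) by simp
    show "card (insert v S) = Suc k" using S(1,2) vS by simp
    show "\<forall>s\<in>insert v S. norm s = 1 \<and> A *v s = (s \<bullet> (A *v s)) *\<^sub>R s"
    proof (rule ballI)
      fix s assume "s \<in> insert v S"
      then consider "s = v" | "s \<in> S" by blast
      then show "norm s = 1 \<and> A *v s = (s \<bullet> (A *v s)) *\<^sub>R s"
      proof cases
        case 1
        show ?thesis unfolding 1 using v(2,3) by (rule conjI)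
      next
        case 2
        show ?thesis using S(3) 2 by (rule bspec)
      qed
    qed
    show "pairwise orthogonal (insert v S)"
    proof -
      have o1: "\<forall>y\<in>S. orthogonal y v" using v(1) by simp
      have o2: "\<forall>y\<in>S. orthogonal v y" using o1 by (simp add: orthogonal_def inner_commute)
      show ?thesis unfolding pairwise_insert using o1 o2 S(4) by blast
    qed
  qed
qed

lemma spectral:
  fixes A :: "real^'n^'n"
  assumes sym: "transpose A = A"
  shows "\<exists>(U::real^'n^'n) d. transpose U ** U = mat 1 \<and> U ** transpose U = mat 1 \<and> A = U ** dg d ** transpose U"
proof -
  obtain S where S: "finite S" "card S = CARD('n)"
    "\<forall>s\<in>S. norm s = 1 \<and> A *v s = (s \<bullet> (A *v s)) *\<^sub>R s" "pairwise orthogonal S"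
    using orth_eigs[OF sym, of "CARD('n)"] by blast
  obtain e where e: "bij_betw e (UNIV::'n set) S"
    using finite_same_card_bij[of "UNIV::'n set" S] S(1,2) by auto
  define U :: "real^'n^'n" where "U = (\<chi> i j. e j $ i)"
  define d where "d j = e j \<bullet> (A *v e j)" for j
  have eS: "e j \<in> S" for j using e bij_betwE by blast
  have einj: "e i = e j \<Longrightarrow> i = j" for i j using e unfolding bij_betw_def inj_on_def by blast
  have dot: "e i \<bullet> e j = (if i = j then 1 else 0)" for i j
  proof (cases "i = j")
    case True
    have "norm (e i) = 1" using S(3) eS by blast
    then show ?thesis using True by (simp add: norm_eq_1)
  next
    case False
    then have "e i \<noteq> e j" using einj by blast
    then have "orthogonal (e i) (e j)" using S(4) eS by (simp add: pairwiseD)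
    then show ?thesis using False by (simp add: orthogonal_def)
  qed
  have colU: "column j U = e j" for j by (simp add: column_def U_def vec_eq_iff)
  have UU: "transpose U ** U = mat 1"
  proof -
    have "transpose U ** U = (\<chi> i j. column i U \<bullet> column j U)" by (rule matrix_mult_transpose_dot_column)
    also have "\<dots> = (\<chi> i j. if i = j then 1 else 0)" by (simp only: colU dot)
    also have "\<dots> = mat 1" by (simp only: mat_def)
    finally show ?thesis .
  qed
  have UU': "U ** transpose U = mat 1" using orthogonal_matrix[THEN iffD2, OF UU] unfolding orthogonal_matrix_def by (rule conjunct2)
  have AU: "A ** U = U ** dg d"
  proof -
    have "(A ** U)$i$j = (U ** dg d)$i$j" for i j
    proof -
      have "(A ** U)$i$j = (A *v e j)$i"
        by (simp add: matrix_matrix_mult_def matrix_vector_mult_def U_def)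
      also have "\<dots> = d j * e j $ i"
      proof -
        have "A *v e j = d j *\<^sub>R e j" unfolding d_def using bspec[OF S(3) eS[of j]] by (rule conjunct2)
        then show ?thesis by simp
      qed
      also have "\<dots> = (U ** dg d)$i$j"
        by (simp add: dg_right U_def)
      finally show ?thesis .
    qed
    then show ?thesis by (simp add: vec_eq_iff)
  qed
  have "A = A ** (U ** transpose U)" using UU' by simp
  also have "\<dots> = U ** dg d ** transpose U" by (simp add: matrix_mul_assoc AU)
  finally have A': "A = U ** dg d ** transpose U" .
  show ?thesis
    apply (rule exI[of _ U])
    apply (rule exI[of _ d])
    by (intro conjI UU UU' A')
qed

lemma psd_symm: "psd S \<Longrightarrow> transpose S = S" by (simp add: psd_def)
lemma psd_qf: "psd S \<Longrightarrow> 0 \<le> x \<bullet> (S *v x)" by (simp add: psd_def)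

lemma mm_sub_left: "(A::real^'n^'n) ** (B - C) = A ** B - A ** C"
  by (simp add: matrix_matrix_mult_def vec_eq_iff sum_subtractf algebra_simps)
lemma mm_sub_right: "((A::real^'n^'n) - B) ** C = A ** C - B ** C"
  by (simp add: matrix_matrix_mult_def vec_eq_iff sum_subtractf algebra_simps)
lemma mm_add_right: "((A::real^'n^'n) + B) ** C = A ** C + B ** C"
  by (simp add: matrix_matrix_mult_def vec_eq_iff sum.distrib algebra_simps)

lemma inner_mat_left:
  fixes U :: "real^'n^'n"
  shows "x \<bullet> (U *v y) = (transpose U *v x) \<bullet> y"
  by (simp add: dot_lmul_matrix)

lemma qf_dg: "z \<bullet> (dg d *v z) = (\<Sum>i\<in>UNIV. d i * (z$i)^2)"
  by (simp add: inner_vec_def dg_vec power2_eq_square mult_ac)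

lemma qf_conj:
  fixes U D :: "real^'n^'n"
  shows "x \<bullet> ((U ** D ** transpose U) *v x) = (transpose U *v x) \<bullet> (D *v (transpose U *v x))"
proof -
  have "(U ** D ** transpose U) *v x = U *v (D *v (transpose U *v x))"
    by (simp only: matrix_vector_mul_assoc matrix_mul_assoc)
  then show ?thesis by (simp only: inner_mat_left)
qed

lemma axis_dg:
  fixes d :: "'n::finite \<Rightarrow> real"
  shows "(axis j 1 :: real^'n) \<bullet> (dg d *v axis j 1) = d j"
proof -
  have "(\<Sum>i\<in>UNIV. d i * ((axis j 1 :: real^'n) $ i)^2) = (\<Sum>i\<in>UNIV. if i = j then d j else 0)"
    by (rule sum.cong) (auto simp: axis_def)
  then show ?thesis by (simp add: qf_dg)
qed

lemma spectral_psd: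
  fixes A U :: "real^'n^'n"
  assumes "psd A" "transpose U ** U = mat 1" "A = U ** dg d ** transpose U"
  shows "d j \<ge> 0"
proof -
  let ?u = "U *v axis j 1"
  have "transpose U *v ?u = axis j 1" using assms(2) by (simp add: matrix_vector_mul_assoc)
  then have "?u \<bullet> (A *v ?u) = d j" using assms(3) qf_conj[of ?u U "dg d"] by (simp add: axis_dg)
  then show ?thesis using psd_qf[OF assms(1)] by metis
qed

lemma conj_symm:
  fixes U :: "real^'n^'n"
  shows "transpose (U ** dg d ** transpose U) = U ** dg d ** transpose U"
  by (simp add: matrix_transpose_mul dg_transpose matrix_mul_assoc)

lemma sqrt_exists:
  fixes A :: "real^'n^'n"
  assumes "psd A"
  shows "\<exists>Y. psd Y \<and> Y ** Y = A"
proof -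
  obtain U :: "real^'n^'n" and d where U: "transpose U ** U = mat 1" "U ** transpose U = mat 1"
    and A: "A = U ** dg d ** transpose U"
    using spectral[OF psd_symm[OF assms]] by blast
  have d0: "d j \<ge> 0" for j using spectral_psd[of A U d j] assms U A by blast
  define s where "s j = sqrt (d j)" for j
  define Y where "Y = U ** dg s ** transpose U"
  have "Y ** Y = U ** dg s ** (transpose U ** U) ** dg s ** transpose U"
    by (simp add: Y_def matrix_mul_assoc)
  also have "\<dots> = U ** dg (\<lambda>i. s i * s i) ** transpose U"
    by (simp add: U(1) dg_mult matrix_mul_assoc[symmetric])
  also have "\<dots> = A" using d0 by (simp add: A s_def)
  finally have YY: "Y ** Y = A" .
  have "psd Y"
    unfolding psd_def
  proof (intro conjI allI)
    show "transpose Y = Y" by (simp add: Y_def conj_symm)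
    fix x
    show "0 \<le> x \<bullet> (Y *v x)"
      unfolding Y_def qf_conj qf_dg s_def by (intro sum_nonneg mult_nonneg_nonneg) (auto simp: d0)
  qed
  then show ?thesis using YY by blast
qed

lemma psd_zero_qf:
  fixes X :: "real^'n^'n"
  assumes "psd X" "x \<bullet> (X *v x) = 0"
  shows "X *v x = 0"
proof -
  obtain Y where Y: "psd Y" "Y ** Y = X" using sqrt_exists[OF assms(1)] by blast
  have "x \<bullet> (X *v x) = (Y *v x) \<bullet> (Y *v x)"
    using symm_inner[OF psd_symm[OF Y(1)], of x "Y *v x"] Y(2)
    by (simp add: matrix_vector_mul_assoc)
  then have "Y *v x = 0" using assms(2) by simp
  then show ?thesis using Y(2) by (metis matrix_vector_mul_assoc matrix_vector_mult_0_right)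
qed

lemma sqrt_unique:
  fixes X Y :: "real^'n^'n"
  assumes X: "psd X" and Y: "psd Y" and XY: "X ** X = Y ** Y"
  shows "X = Y"
proof -
  define D where "D = X - Y"
  have symD: "transpose D = D" using X Y by (simp add: D_def psd_def transpose_def vec_eq_iff)
  have E: "X ** D + D ** Y = 0"
    using XY by (simp add: D_def mm_sub_left mm_sub_right)
  obtain V :: "real^'n^'n" and mu where V: "transpose V ** V = mat 1" "V ** transpose V = mat 1"
    and DV: "D = V ** dg mu ** transpose V"
    using spectral[OF symD] by blast
  have gen: "w \<bullet> ((X ** D + D ** Y) *v w) = w \<bullet> (X *v (D *v w)) + w \<bullet> (D *v (Y *v w))" for w
    by (simp add: matrix_vector_mult_add_rdistrib inner_add_right matrix_vector_mul_assoc)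
  have mu0: "mu j = 0" for j
  proof -
    let ?v = "V *v axis j 1"
    have DVV: "D ** V = V ** dg mu" using V(1) DV by (simp add: matrix_mul_assoc[symmetric])
    have Dv: "D *v ?v = mu j *\<^sub>R ?v"
    proof -
      have "D *v ?v = V *v (dg mu *v axis j 1)" using DVV by (simp add: matrix_vector_mul_assoc)
      also have "dg mu *v axis j 1 = mu j *\<^sub>R axis j 1"
        by (simp add: vec_eq_iff dg_vec axis_def)
      finally show ?thesis by (simp add: matrix_vector_mult_scaleR)
    qed
    have vv: "?v \<bullet> ?v = 1"
    proof -
      have "?v \<bullet> ?v = (transpose V *v ?v) \<bullet> axis j 1" by (simp add: inner_mat_left)
      also have "transpose V *v ?v = axis j 1" using V(1) by (simp add: matrix_vector_mul_assoc)
      finally show ?thesis by (simp add: inner_axis_axis)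
    qed
    have "0 = ?v \<bullet> ((X ** D + D ** Y) *v ?v)" using E by simp
    also have "\<dots> = ?v \<bullet> (X *v (D *v ?v)) + ?v \<bullet> (D *v (Y *v ?v))"
      by (rule gen)
    also have "?v \<bullet> (D *v (Y *v ?v)) = (D *v ?v) \<bullet> (Y *v ?v)" by (rule symm_inner[OF symD])
    finally have "0 = mu j * (?v \<bullet> (X *v ?v) + ?v \<bullet> (Y *v ?v))"
      using Dv by (simp add: matrix_vector_mult_scaleR algebra_simps symm_inner[OF psd_symm[OF Y]])
    then consider "mu j = 0" | "?v \<bullet> (X *v ?v) + ?v \<bullet> (Y *v ?v) = 0" by auto
    then show ?thesis
    proof cases
      case 2
      then have "?v \<bullet> (X *v ?v) = 0" "?v \<bullet> (Y *v ?v) = 0"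
        using psd_qf[OF X, of ?v] psd_qf[OF Y, of ?v] by linarith+
      then have "X *v ?v = 0" "Y *v ?v = 0" using psd_zero_qf X Y by blast+
      then have "D *v ?v = 0" by (simp add: D_def matrix_vector_mult_diff_rdistrib)
      then have "mu j *\<^sub>R ?v = 0" using Dv by simp
      then show ?thesis using vv by auto
    qed
  qed
  have "dg mu = 0" using mu0 dg_zero by (metis ext)
  then have "D = 0" using DV by simp
  then show ?thesis by (simp add: D_def)
qed

lemma psd_sqrt_prop:
  fixes S :: "real^'n^'n"
  assumes "psd S"
  shows "psd (psd_sqrt S) \<and> psd_sqrt S ** psd_sqrt S = S"
proof -
  have "\<exists>!X. psd X \<and> X ** X = S"
    using sqrt_exists[OF assms] sqrt_unique by metis
  then show ?thesis unfolding psd_sqrt_def by (rule theI')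
qed

lemma diag_entry: "(M::real^'n^'n)$i$i = axis i 1 \<bullet> (M *v axis i 1)"
  by (simp add: inner_axis' matrix_vector_mul_component inner_axis)

lemma trace_psd_mult:
  fixes P Q :: "real^'n^'n"
  assumes P: "psd P" and Q: "psd Q"
  shows "0 \<le> trace (P ** Q)"
proof -
  obtain Y where Y: "psd Y" "Y ** Y = Q" using sqrt_exists[OF Q] by blast
  have "trace (P ** Q) = trace ((P ** Y) ** Y)" using Y(2) by (simp add: matrix_mul_assoc[symmetric])
  also have "\<dots> = trace (Y ** (P ** Y))" by (rule trace_mul_sym)
  also have "\<dots> = (\<Sum>i\<in>UNIV. (Y ** (P ** Y))$i$i)" by (simp add: trace_def)
  also have "\<dots> \<ge> 0"
  proof (rule sum_nonneg)
    fix i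
    let ?a = "axis i 1 :: real^'n"
    have "(Y ** (P ** Y))$i$i = ?a \<bullet> (Y *v (P *v (Y *v ?a)))"
      by (simp add: diag_entry[of _ i] matrix_vector_mul_assoc)
    also have "\<dots> = (Y *v ?a) \<bullet> (P *v (Y *v ?a))" by (rule symm_inner[OF psd_symm[OF Y(1)]])
    also have "\<dots> \<ge> 0" by (rule psd_qf[OF P])
    finally show "(Y ** (P ** Y))$i$i \<ge> 0" .
  qed
  finally show ?thesis .
qed

lemma psd_diag_nonneg: "psd (P::real^'n^'n) \<Longrightarrow> 0 \<le> P$i$i"
  by (simp add: diag_entry psd_qf)

lemma psd_trace_nonneg: "psd (P::real^'n^'n) \<Longrightarrow> 0 \<le> trace P"
  unfolding trace_def by (intro sum_nonneg psd_diag_nonneg)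

lemma psd_diag_le_trace: "psd (P::real^'n^'n) \<Longrightarrow> P$i$i \<le> trace P"
  unfolding trace_def by (rule member_le_sum) (auto intro: psd_diag_nonneg)

lemma psd_entry_bound:
  fixes P :: "real^'n^'n"
  assumes P: "psd P"
  shows "\<bar>P$i$j\<bar> \<le> trace P"
proof -
  obtain Y where Y: "psd Y" "Y ** Y = P" using sqrt_exists[OF P] by blast
  have ent: "P$k$l = (Y *v axis k 1) \<bullet> (Y *v axis l 1)" for k l
  proof -
    have "P$k$l = axis k 1 \<bullet> (P *v axis l 1)"
      by (simp add: inner_axis' matrix_vector_mul_component inner_axis)
    also have "\<dots> = axis k 1 \<bullet> (Y *v (Y *v axis l 1))" using Y(2) by (simp add: matrix_vector_mul_assoc)
    also have "\<dots> = (Y *v axis k 1) \<bullet> (Y *v axis l 1)" by (rule symm_inner[OF psd_symm[OF Y(1)]])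
    finally show ?thesis .
  qed
  let ?x = "Y *v axis i 1" and ?y = "Y *v axis j 1"
  have "\<bar>P$i$j\<bar> \<le> norm ?x * norm ?y" unfolding ent by (rule Cauchy_Schwarz_ineq2)
  also have "\<dots> \<le> ((norm ?x)^2 + (norm ?y)^2) / 2"
  proof -
    have "0 \<le> (norm ?x - norm ?y)^2" by simp
    then show ?thesis by (simp add: power2_eq_square algebra_simps)
  qed
  also have "\<dots> = (P$i$i + P$j$j) / 2" by (simp add: ent dot_square_norm)
  also have "\<dots> \<le> trace P" using psd_diag_le_trace[OF P, of i] psd_diag_le_trace[OF P, of j] by simp
  finally show ?thesis .
qed

lemma psd_norm_le_trace:
  fixes P :: "real^'n^'n"
  assumes P: "psd P"
  shows "norm P \<le> real (CARD('n))^2 * trace P"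
proof -
  have "norm P \<le> (\<Sum>i\<in>UNIV. norm (P$i))" unfolding norm_vec_def by (rule L2_set_le_sum) simp
  also have "\<dots> \<le> (\<Sum>i\<in>(UNIV::'n set). (\<Sum>j\<in>(UNIV::'n set). trace P))"
  proof (rule sum_mono)
    fix i
    have "norm (P$i) \<le> (\<Sum>j\<in>UNIV. \<bar>P$i$j\<bar>)" by (rule norm_le_l1_cart)
    also have "\<dots> \<le> (\<Sum>j\<in>(UNIV::'n set). trace P)" by (rule sum_mono) (rule psd_entry_bound[OF P])
    finally show "norm (P$i) \<le> (\<Sum>j\<in>(UNIV::'n set). trace P)" .
  qed
  also have "\<dots> = real (CARD('n))^2 * trace P" by (simp add: power2_eq_square)
  finally show ?thesis .
qed

lemma prod_ge_sum:
  fixes d :: "'a \<Rightarrow> real"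
  assumes "finite I" "\<And>i. i \<in> I \<Longrightarrow> 0 \<le> d i"
  shows "1 + sum d I \<le> (\<Prod>i\<in>I. 1 + d i)"
  using assms
proof (induction I rule: finite_induct)
  case empty
  then show ?case by simp
next
  case (insert a F)
  have IH: "1 + sum d F \<le> (\<Prod>i\<in>F. 1 + d i)" using insert by auto
  have da: "0 \<le> d a" using insert by auto
  have sF: "0 \<le> sum d F" using insert by (auto intro: sum_nonneg)
  have "1 + sum d (insert a F) = 1 + d a + sum d F" using insert by simp
  also have "\<dots> \<le> (1 + d a) * (1 + sum d F)" using da sF by (simp add: algebra_simps)
  also have "\<dots> \<le> (1 + d a) * (\<Prod>i\<in>F. 1 + d i)" using IH da by (intro mult_left_mono) auto
  also have "\<dots> = (\<Prod>i\<in>insert a F. 1 + d i)" using insert by simp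
  finally show ?case .
qed

lemma conj_det:
  fixes U M :: "real^'n^'n"
  assumes "U ** transpose U = mat 1"
  shows "det (U ** M ** transpose U) = det M"
proof -
  have "det (U ** M ** transpose U) = det M * (det U * det (transpose U))"
    by (simp add: det_mul)
  also have "det U * det (transpose U) = 1" using assms det_mul[of U "transpose U"] by simp
  finally show ?thesis by simp
qed

lemma conj_trace:
  fixes U M :: "real^'n^'n"
  assumes "transpose U ** U = mat 1"
  shows "trace (U ** M ** transpose U) = trace M"
proof -
  have "trace ((U ** M) ** transpose U) = trace (transpose U ** (U ** M))" by (rule trace_mul_sym)
  also have "\<dots> = trace M" using assms by (simp add: matrix_mul_assoc)
  finally show ?thesis .
qed

lemma det_I_plus:
  fixes Z :: "real^'n^'n"
  assumes Z: "psd Z"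
  shows "1 + trace Z \<le> det (mat 1 + Z)"
proof -
  obtain U :: "real^'n^'n" and d where U: "transpose U ** U = mat 1" "U ** transpose U = mat 1"
    and ZU: "Z = U ** dg d ** transpose U"
    using spectral[OF psd_symm[OF Z]] by blast
  have d0: "0 \<le> d j" for j using spectral_psd[of Z U d j] Z U ZU by blast
  have "mat 1 = U ** dg (\<lambda>_. 1) ** transpose U" using U(2) by (simp add: dg_mat[symmetric])
  then have "mat 1 + Z = U ** (dg (\<lambda>_. 1) + dg d) ** transpose U"
    by (simp add: ZU matrix_add_ldistrib mm_add_right)
  also have "\<dots> = U ** dg (\<lambda>i. 1 + d i) ** transpose U" by (simp add: dg_add)
  finally have "det (mat 1 + Z) = (\<Prod>i\<in>UNIV. 1 + d i)" using conj_det[OF U(2)] by (simp add: dg_det)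
  moreover have "trace Z = (\<Sum>i\<in>UNIV. d i)" using conj_trace[OF U(1)] ZU by (simp add: dg_trace)
  ultimately show ?thesis using prod_ge_sum[of UNIV d] d0 by simp
qed

lemma transpose_add': "transpose ((A::real^'n^'m) + B) = transpose A + transpose B"
  by (simp add: transpose_def vec_eq_iff)
lemma transpose_diff': "transpose ((A::real^'n^'m) - B) = transpose A - transpose B"
  by (simp add: transpose_def vec_eq_iff)

lemma inner_transpose_vec:
  fixes B :: "real^'m^'n"
  shows "(transpose B *v u) \<bullet> v = u \<bullet> (B *v v)"
  by (simp add: dot_lmul_matrix)

lemma posdef_psd: "posdef S \<Longrightarrow> psd S"
  unfolding posdef_def psd_def by (metis inner_zero_left matrix_vector_mult_0_right order_refl less_imp_le)

lemma posdef_invertible: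
  fixes W :: "real^'n^'n"
  assumes "posdef W"
  shows "invertible W"
proof -
  have "inj ((*v) W)"
  proof (rule injI)
    fix x y assume "W *v x = W *v y"
    then have "W *v (x - y) = 0" by (simp add: matrix_vector_mult_diff_distrib)
    then have "(x - y) \<bullet> (W *v (x - y)) = 0" by simp
    then show "x = y" using assms unfolding posdef_def by (metis less_irrefl right_minus_eq)
  qed
  then obtain B where "B ** W = mat 1" using matrix_left_invertible_injective by blast
  then show ?thesis using invertible_left_inverse by blast
qed

lemma inv_props:
  fixes W :: "real^'n^'n"
  assumes "invertible W"
  shows "W ** matrix_inv W = mat 1 \<and> matrix_inv W ** W = mat 1"
  using assms unfolding invertible_def matrix_inv_def by (rule someI_ex)

lemma inv_symm:
  fixes W :: "real^'n^'n"
  assumes "invertible W" "transpose W = W"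
  shows "transpose (matrix_inv W) = matrix_inv W"
proof -
  let ?Wi = "matrix_inv W"
  have i: "W ** ?Wi = mat 1" "?Wi ** W = mat 1" using inv_props[OF assms(1)] by auto
  have "transpose ?Wi ** W = mat 1"
    using arg_cong[OF i(1), of transpose] assms(2) by (simp add: matrix_transpose_mul)
  then have "transpose ?Wi = transpose ?Wi ** (W ** ?Wi)" using i(1) by simp
  also have "\<dots> = ?Wi" using \<open>transpose ?Wi ** W = mat 1\<close> by (simp add: matrix_mul_assoc)
  finally show ?thesis .
qed

lemma riccati_core:
  fixes P :: "real^'n^'n" and B :: "real^'m^'n" and R S Wi :: "real^'m^'m"
  assumes eps: "eps > 0" and P: "psd P" and R: "psd R" and S: "transpose S = S"
    and Wi: "(mat 1 + S ** ((1/eps) *\<^sub>R (R + transpose B ** P ** B)) ** S) ** Wi = mat 1"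
    and WiT: "transpose Wi = Wi"
  shows "psd (P - (1/eps) *\<^sub>R (P ** B ** S ** Wi ** S ** transpose B ** P))"
proof -
  let ?W = "mat 1 + S ** ((1/eps) *\<^sub>R (R + transpose B ** P ** B)) ** S"
  define M where "M = P - (1/eps) *\<^sub>R (P ** B ** S ** Wi ** S ** transpose B ** P)"
  have PT: "transpose P = P" using P by (simp add: psd_def)
  have MT: "transpose M = M"
    unfolding M_def transpose_diff' transpose_scalar
    by (simp add: matrix_transpose_mul PT S WiT matrix_mul_assoc)
  have "0 \<le> x \<bullet> (M *v x)" for x
  proof -
    define g where "g = S *v (transpose B *v (P *v x))"
    define z where "z = Wi *v g"
    define w where "w = B *v (S *v z)"
    define a where "a = x \<bullet> (P *v x)"
    define b where "b = (P *v x) \<bullet> w"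
    define c where "c = w \<bullet> (P *v w)"
    define q where "q = z \<bullet> z + (1/eps) * ((S *v z) \<bullet> (R *v (S *v z)))"
    have e1: "(P ** B ** S ** Wi ** S ** transpose B ** P) *v x = P *v w"
      unfolding w_def z_def g_def by (simp only: matrix_vector_mul_assoc matrix_mul_assoc)
    have Mx: "M *v x = P *v x - (1/eps) *\<^sub>R (P *v w)"
      unfolding M_def matrix_vector_mult_diff_rdistrib scaleR_matrix_vector_assoc[symmetric] e1 ..
    have xMx: "x \<bullet> (M *v x) = a - (1/eps) * b"
    proof -
      have "x \<bullet> (P *v w) = (P *v x) \<bullet> w" by (rule symm_inner[OF PT])
      then show ?thesis unfolding Mx a_def b_def by (simp add: inner_diff_right)
    qed
    have gz: "g \<bullet> z = b"
    proof -
      have "g \<bullet> z = (transpose B *v (P *v x)) \<bullet> (S *v z)"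
        unfolding g_def using symm_inner[OF S, of "transpose B *v (P *v x)" z] by (simp add: inner_commute)
      also have "\<dots> = (P *v x) \<bullet> w" unfolding w_def by (rule inner_transpose_vec)
      finally show ?thesis by (simp add: b_def)
    qed
    have Wz: "?W *v z = g"
    proof -
      have "Wi ** ?W = mat 1" using Wi matrix_left_right_inverse by blast
      then have WWi: "?W ** Wi = mat 1" using Wi by simp
      show ?thesis unfolding z_def by (simp add: matrix_vector_mul_assoc WWi)
    qed
    have Wzz: "(?W *v z) \<bullet> z = q + (1/eps) * c"
    proof -
      let ?y = "S *v z"
      have "(?W *v z) \<bullet> z = z \<bullet> z + ((S ** ((1/eps) *\<^sub>R (R + transpose B ** P ** B)) ** S) *v z) \<bullet> z"
        by (simp add: matrix_vector_mult_add_rdistrib inner_add_left)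
      also have "((S ** ((1/eps) *\<^sub>R (R + transpose B ** P ** B)) ** S) *v z) \<bullet> z
          = (1/eps) * ((R *v ?y) \<bullet> ?y + (transpose B *v (P *v (B *v ?y))) \<bullet> ?y)"
      proof -
        have "((S ** ((1/eps) *\<^sub>R (R + transpose B ** P ** B)) ** S) *v z) \<bullet> z
            = (S *v (((1/eps) *\<^sub>R (R + transpose B ** P ** B)) *v ?y)) \<bullet> z"
          by (simp only: matrix_vector_mul_assoc matrix_mul_assoc)
        also have "\<dots> = (((1/eps) *\<^sub>R (R + transpose B ** P ** B)) *v ?y) \<bullet> ?y"
          using symm_inner[OF S, of "((1/eps) *\<^sub>R (R + transpose B ** P ** B)) *v ?y" z]
          by (simp add: inner_commute)
        also have "\<dots> = (1/eps) * ((R *v ?y) \<bullet> ?y + (transpose B *v (P *v (B *v ?y))) \<bullet> ?y)"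
        proof -
          have "((1/eps) *\<^sub>R (R + transpose B ** P ** B)) *v y
              = (1/eps) *\<^sub>R (R *v y + transpose B *v (P *v (B *v y)))" for y
            by (simp only: scaleR_matrix_vector_assoc[symmetric] matrix_vector_mult_add_rdistrib
                matrix_vector_mul_assoc matrix_mul_assoc)
          from this[of ?y] show ?thesis by (simp only: inner_scaleR_left inner_add_left)
        qed
        finally show ?thesis .
      qed
      also have "(transpose B *v (P *v (B *v ?y))) \<bullet> ?y = c"
        unfolding c_def w_def using inner_transpose_vec[of B "P *v (B *v ?y)" ?y]
        by (simp add: inner_commute del: transpose_matrix_vector)
      also have "(R *v ?y) \<bullet> ?y = ?y \<bullet> (R *v ?y)" by (rule inner_commute)
      finally show ?thesis unfolding q_def by (simp add: algebra_simps)
    qed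
    have bq: "b = q + (1/eps) * c" using gz Wz Wzz by simp
    have q0: "0 \<le> q"
      unfolding q_def using psd_qf[OF R, of "S *v z"] eps by (intro add_nonneg_nonneg mult_nonneg_nonneg) auto
    have sq: "0 \<le> a - 2 * (1/eps) * b + (1/eps)^2 * c"
    proof -
      let ?v = "x - (1/eps) *\<^sub>R w"
      have "0 \<le> ?v \<bullet> (P *v ?v)" by (rule psd_qf[OF P])
      also have "?v \<bullet> (P *v ?v) = a - 2 * (1/eps) * b + (1/eps)^2 * c"
      proof -
        have "x \<bullet> (P *v w) = (P *v x) \<bullet> w" by (rule symm_inner[OF PT])
        moreover have "w \<bullet> (P *v x) = (P *v x) \<bullet> w" by (rule inner_commute)
        ultimately show ?thesis
          unfolding a_def b_def c_def
          by (simp add: matrix_vector_mult_diff_distrib matrix_vector_mult_scaleR inner_diff_left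
              inner_diff_right power2_eq_square algebra_simps)
      qed
      finally show ?thesis .
    qed
    have "a - (1/eps) * b = (a - 2 * (1/eps) * b + (1/eps)^2 * c) + (1/eps) * q"
      unfolding bq by (simp add: power2_eq_square algebra_simps add_divide_distrib)
    also have "\<dots> \<ge> 0" using sq q0 eps by simp
    finally show ?thesis using xMx by simp
  qed
  then show ?thesis using MT unfolding psd_def M_def by simp
qed

lemma psd_congr:
  fixes M :: "real^'n^'n" and A :: "real^'k^'n"
  assumes "psd M"
  shows "psd (transpose A ** M ** A)"
  unfolding psd_def
proof (intro conjI allI)
  show "transpose (transpose A ** M ** A) = transpose A ** M ** A"
    using psd_symm[OF assms] by (simp add: matrix_transpose_mul matrix_mul_assoc)
  fix x
  have "(transpose A ** M ** A) *v x = transpose A *v (M *v (A *v x))"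
    by (simp only: matrix_vector_mul_assoc matrix_mul_assoc)
  then have "x \<bullet> ((transpose A ** M ** A) *v x) = (A *v x) \<bullet> (M *v (A *v x))"
    using inner_transpose_vec[of A "M *v (A *v x)" x] by (simp add: inner_commute del: transpose_matrix_vector)
  then show "0 \<le> x \<bullet> ((transpose A ** M ** A) *v x)" using psd_qf[OF assms] by simp
qed

lemma psd_add: "psd (A::real^'n^'n) \<Longrightarrow> psd B \<Longrightarrow> psd (A + B)"
  unfolding psd_def by (simp add: transpose_add' matrix_vector_mult_add_rdistrib inner_add_right add_nonneg_nonneg)

lemma psd_scale: "psd (A::real^'n^'n) \<Longrightarrow> 0 \<le> k \<Longrightarrow> psd (k *\<^sub>R A)"
  unfolding psd_def by (simp add: transpose_scalar scaleR_matrix_vector_assoc[symmetric])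

lemma psd_mat1: "psd (mat 1 :: real^'n^'n)"
  unfolding psd_def by simp

lemma Pi_step_psd:
  fixes P Ak :: "real^'n^'n" and Bk :: "real^'m^'n" and Rk Srho :: "real^'m^'m"
  assumes eps: "eps > 0" and P: "psd P" and R: "posdef Rk" and Sr: "psd Srho"
  shows "psd (Pi_step eps Ak Bk Rk Srho P)"
proof -
  define S where "S = psd_sqrt Srho"
  define C where "C = (1/eps) *\<^sub>R (Rk + transpose Bk ** P ** Bk)"
  define W where "W = mat 1 + S ** C ** S"
  have S: "psd S" using psd_sqrt_prop[OF Sr] by (simp add: S_def)
  have Cpsd: "psd C" unfolding C_def using eps
    by (intro psd_scale psd_add posdef_psd[OF R] psd_congr[OF P]) auto
  have SCS: "psd (S ** C ** S)" using psd_congr[OF Cpsd, of S] psd_symm[OF S] by simp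
  have Wpd: "posdef W"
    unfolding posdef_def
  proof (intro conjI allI impI)
    show "transpose W = W" using psd_symm[OF SCS] by (simp add: W_def transpose_add')
    fix x :: "real^'m" assume "x \<noteq> 0"
    then have "0 < x \<bullet> x" by simp
    moreover have "0 \<le> x \<bullet> ((S ** C ** S) *v x)" by (rule psd_qf[OF SCS])
    moreover have "x \<bullet> (W *v x) = x \<bullet> x + x \<bullet> ((S ** C ** S) *v x)"
      by (simp add: W_def matrix_vector_mult_add_rdistrib inner_add_right)
    ultimately show "0 < x \<bullet> (W *v x)" by linarith
  qed
  have WT: "transpose W = W" using Wpd by (simp add: posdef_def)
  define Wi where "Wi = matrix_inv W"
  have Winv: "invertible W" by (rule posdef_invertible[OF Wpd])
  have WWi: "W ** Wi = mat 1" using inv_props[OF Winv] by (simp add: Wi_def)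
  have WiT: "transpose Wi = Wi" using inv_symm[OF Winv WT] by (simp add: Wi_def)
  have core: "psd (P - (1/eps) *\<^sub>R (P ** Bk ** S ** Wi ** S ** transpose Bk ** P))"
    by (rule riccati_core[OF eps P posdef_psd[OF R] psd_symm[OF S] _ WiT])
      (use WWi in \<open>simp add: W_def C_def\<close>)
  have eq: "Pi_step eps Ak Bk Rk Srho P =
      transpose Ak ** (P - (1/eps) *\<^sub>R (P ** Bk ** S ** Wi ** S ** transpose Bk ** P)) ** Ak"
    unfolding Pi_step_def Let_def S_def[symmetric] C_def[symmetric] W_def[symmetric] Wi_def[symmetric]
    by (simp add: mm_sub_left mm_sub_right matrix_scalar_ac scalar_matrix_assoc[symmetric] matrix_mul_assoc)
  show ?thesis unfolding eq by (rule psd_congr[OF core])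
qed

lemma Pi_aux_psd:
  assumes eps: "eps > 0" and T: "T \<ge> 1" and R: "\<And>k. k < T \<Longrightarrow> posdef (R k)"
    and Sr: "\<And>k. k < T \<Longrightarrow> psd (Srho k)" and F: "psd F"
  shows "psd (Pi_aux T eps A B R F Srho j)"
proof (induction j)
  case 0
  then show ?case using F by simp
next
  case (Suc j)
  have lt: "T - Suc j < T" using T by simp
  show ?case using Pi_step_psd[OF eps Suc.IH R[OF lt] Sr[OF lt]] by simp
qed

lemma posdef_lb:
  fixes R :: "real^'n^'n"
  assumes "posdef R"
  shows "\<exists>c>0. \<forall>x. c * (x \<bullet> x) \<le> x \<bullet> (R *v x)"
proof -
  obtain U :: "real^'n^'n" and d where U: "transpose U ** U = mat 1" "U ** transpose U = mat 1"
    and RU: "R = U ** dg d ** transpose U"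
    using spectral[of R] assms by (auto simp: posdef_def)
  have dpos: "0 < d j" for j
  proof -
    let ?u = "U *v axis j 1"
    have tu: "transpose U *v ?u = axis j 1" using U(1) by (simp add: matrix_vector_mul_assoc)
    then have "?u \<bullet> (R *v ?u) = d j" using RU qf_conj[of ?u U "dg d"] by (simp add: axis_dg)
    moreover have "?u \<noteq> 0"
    proof
      assume "?u = 0"
      then have "transpose U *v ?u = 0" by simp
      then show False using tu by (simp add: axis_eq_0_iff)
    qed
    ultimately show ?thesis using assms by (metis posdef_def)
  qed
  define c where "c = Min (range d)"
  have cpos: "c > 0" unfolding c_def by (subst Min_gr_iff) (auto simp: dpos)
  have cle: "c \<le> d j" for j unfolding c_def by (rule Min_le) auto
  have "c * (x \<bullet> x) \<le> x \<bullet> (R *v x)" for x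
  proof -
    let ?z = "transpose U *v x"
    have zz: "?z \<bullet> ?z = x \<bullet> x"
    proof -
      have "?z \<bullet> ?z = x \<bullet> (U *v ?z)" by (rule inner_mat_left[symmetric])
      also have "U *v ?z = x" by (simp only: matrix_vector_mul_assoc U(2) matrix_vector_mul_lid)
      finally show ?thesis .
    qed
    have "c * (x \<bullet> x) = (\<Sum>i\<in>UNIV. c * (?z$i)^2)"
      unfolding zz[symmetric] by (simp add: inner_vec_def sum_distrib_left power2_eq_square)
    also have "\<dots> \<le> (\<Sum>i\<in>UNIV. d i * (?z$i)^2)"
      by (rule sum_mono) (simp add: cle mult_right_mono)
    also have "\<dots> = x \<bullet> (R *v x)" unfolding RU qf_conj qf_dg ..
    finally show ?thesis .
  qed
  then show ?thesis using cpos by blast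
qed

lemma trace_scaleR: "trace (k *\<^sub>R (A::real^'n^'n)) = k * trace A"
  by (simp add: trace_def sum_distrib_left)

lemma det_scaled_id: "det (eps *\<^sub>R (mat 1 :: real^'n^'n)) = eps ^ CARD('n)"
proof -
  have "eps *\<^sub>R (mat 1 :: real^'n^'n) = dg (\<lambda>_. eps)" by (simp add: vec_eq_iff dg_def mat_def)
  then show ?thesis by (simp add: dg_det)
qed

lemma logdet_lb:
  fixes N Sr :: "real^'m^'m"
  assumes eps: "eps > 0" and Sr: "psd Sr" and NT: "transpose N = N" and c: "c > 0"
    and lb: "\<And>x. c * (x \<bullet> x) \<le> x \<bullet> (N *v x)"
  shows "1 + c * trace Sr / eps \<le> det (Sr + eps *\<^sub>R matrix_inv N) / det (eps *\<^sub>R matrix_inv N)"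
proof -
  have Npd: "posdef N" unfolding posdef_def
  proof (intro conjI allI impI NT)
    fix x :: "real^'m" assume "x \<noteq> 0"
    then have "0 < c * (x \<bullet> x)" using c by simp
    then show "0 < x \<bullet> (N *v x)" using lb[of x] by linarith
  qed
  have Npsd: "psd N" by (rule posdef_psd[OF Npd])
  obtain Y where Y: "psd Y" "Y ** Y = N" using sqrt_exists[OF Npsd] by blast
  have YT: "transpose Y = Y" by (rule psd_symm[OF Y(1)])
  have "det N \<noteq> 0" using posdef_invertible[OF Npd] invertible_det_nz by blast
  then have "det Y \<noteq> 0" using Y(2) det_mul[of Y Y] by auto
  then have Yinv: "invertible Y" using invertible_det_nz by blast
  define Yi where "Yi = matrix_inv Y"
  have YYi: "Y ** Yi = mat 1" "Yi ** Y = mat 1" using inv_props[OF Yinv] by (auto simp: Yi_def)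
  define Ni where "Ni = matrix_inv N"
  have NNi: "N ** Ni = mat 1" using inv_props[OF posdef_invertible[OF Npd]] by (simp add: Ni_def)
  have NiY: "Ni = Yi ** Yi"
  proof -
    have "Yi ** Yi ** N = mat 1"
      unfolding Y(2)[symmetric]
      by (metis YYi(2) matrix_mul_assoc matrix_mul_lid)
    have "(Yi ** Yi ** N) ** Ni = Yi ** Yi"
      by (simp only: matrix_mul_assoc[symmetric] NNi matrix_mul_rid)
    then show ?thesis using \<open>Yi ** Yi ** N = mat 1\<close> by simp
  qed
  have detYi: "det Yi \<noteq> 0" using YYi(2) det_mul[of Yi Y] by auto
  define Z where "Z = Y ** Sr ** Y"
  have Zpsd: "psd Z" using psd_congr[OF Sr, of Y] YT by (simp add: Z_def)
  define E where "E = eps *\<^sub>R (mat 1 :: real^'m^'m)"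
  have YiZYi: "Yi ** Z ** Yi = Sr"
  proof -
    have "Yi ** Z ** Yi = (Yi ** Y) ** Sr ** (Y ** Yi)" by (simp add: Z_def matrix_mul_assoc)
    then show ?thesis using YYi by simp
  qed
  have YiEYi: "Yi ** E ** Yi = eps *\<^sub>R Ni"
    unfolding E_def NiY by (simp add: matrix_scalar_ac scalar_matrix_assoc[symmetric])
  have e1: "Sr + eps *\<^sub>R Ni = Yi ** (Z + E) ** Yi"
    by (simp add: matrix_add_ldistrib mm_add_right YiZYi YiEYi)
  have detE: "det E = eps ^ CARD('m)" unfolding E_def by (rule det_scaled_id)
  have detE0: "det E \<noteq> 0" using detE eps by simp
  have ZE: "Z + E = E ** (mat 1 + (1/eps) *\<^sub>R Z)"
    using eps by (simp add: E_def matrix_add_ldistrib matrix_scalar_ac scalar_matrix_assoc[symmetric])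
  have ratio: "det (Sr + eps *\<^sub>R Ni) / det (eps *\<^sub>R Ni) = det (mat 1 + (1/eps) *\<^sub>R Z)"
  proof -
    have "det (Sr + eps *\<^sub>R Ni) = det Yi * det E * det (mat 1 + (1/eps) *\<^sub>R Z) * det Yi"
      unfolding e1 ZE by (simp add: det_mul)
    moreover have "det (eps *\<^sub>R Ni) = det Yi * det E * det Yi"
      unfolding YiEYi[symmetric] by (simp add: det_mul)
    ultimately show ?thesis using detYi detE0 by simp
  qed
  have "1 + trace ((1/eps) *\<^sub>R Z) \<le> det (mat 1 + (1/eps) *\<^sub>R Z)"
    by (rule det_I_plus[OF psd_scale[OF Zpsd]]) (use eps in simp)
  moreover have "trace ((1/eps) *\<^sub>R Z) = trace (N ** Sr) / eps"
  proof -
    have "trace Z = trace ((Y ** Sr) ** Y)" by (simp add: Z_def)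
    also have "\<dots> = trace (Y ** (Y ** Sr))" by (rule trace_mul_sym)
    also have "\<dots> = trace (N ** Sr)" using Y(2) by (simp add: matrix_mul_assoc)
    finally show ?thesis by (simp add: trace_scaleR)
  qed
  moreover have "c * trace Sr \<le> trace (N ** Sr)"
  proof -
    have "psd (N - c *\<^sub>R mat 1)" unfolding psd_def
    proof (intro conjI allI)
      show "transpose (N - c *\<^sub>R mat 1) = N - c *\<^sub>R mat 1" by (simp add: transpose_diff' transpose_scalar NT)
      fix x
      show "0 \<le> x \<bullet> ((N - c *\<^sub>R mat 1) *v x)"
        using lb[of x] by (simp add: matrix_vector_mult_diff_rdistrib inner_diff_right scaleR_matrix_vector_assoc[symmetric])
    qed
    then have "0 \<le> trace ((N - c *\<^sub>R mat 1) ** Sr)" using trace_psd_mult Sr by blast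
    also have "trace ((N - c *\<^sub>R mat 1) ** Sr) = trace (N ** Sr) - c * trace Sr"
      by (simp add: mm_sub_right trace_sub scalar_matrix_assoc[symmetric] trace_scaleR)
    finally show ?thesis by simp
  qed
  ultimately have "1 + c * trace Sr / eps \<le> det (mat 1 + (1/eps) *\<^sub>R Z)"
  proof -
    assume a1: "1 + trace ((1/eps) *\<^sub>R Z) \<le> det (mat 1 + (1/eps) *\<^sub>R Z)"
      and a2: "trace ((1/eps) *\<^sub>R Z) = trace (N ** Sr) / eps" and a3: "c * trace Sr \<le> trace (N ** Sr)"
    have "c * trace Sr / eps \<le> trace (N ** Sr) / eps" using divide_right_mono[OF a3, of eps] eps by simp
    then show ?thesis using a1 a2 by linarith
  qed
  then show ?thesis using ratio by (simp add: Ni_def)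
qed

theorem lemma4:
  fixes T :: nat and eps :: real
    and A :: "nat \<Rightarrow> real^'n^'n" and B :: "nat \<Rightarrow> real^'m^'n"
    and R :: "nat \<Rightarrow> real^'m^'m" and Sw :: "nat \<Rightarrow> real^'n^'n"
    and F Sx :: "real^'n^'n"
  assumes "T \<ge> 1" and "eps > 0"
    and "\<And>k. k < T \<Longrightarrow> posdef (R k)"
    and "\<And>k. k < T \<Longrightarrow> posdef (Sw k)"
    and "posdef F" and "posdef Sx"
  shows "\<forall>M. \<exists>r. \<forall>Srho :: nat \<Rightarrow> real^'m^'m.
           (\<forall>k<T. psd (Srho k)) \<longrightarrow> (\<exists>k<T. norm (Srho k) \<ge> r) \<longrightarrow>
           J_check T eps A B R Sw F Sx Srho \<ge> M"
proof
  fix M :: real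
  note T = assms(1) and eps = assms(2) and Rpd = assms(3) and Swpd = assms(4)
    and Fpd = assms(5) and Sxpd = assms(6)
  have "\<forall>k. \<exists>c. k < T \<longrightarrow> c > 0 \<and> (\<forall>x. c * (x \<bullet> x) \<le> x \<bullet> (R k *v x))"
    using posdef_lb Rpd by blast
  then obtain cf where cf: "\<And>k. k < T \<Longrightarrow> cf k > 0 \<and> (\<forall>x. cf k * (x \<bullet> x) \<le> x \<bullet> (R k *v x))"
    by metis
  define c0 where "c0 = Min (cf ` {..<T})"
  have c0pos: "c0 > 0" unfolding c0_def using T cf by (subst Min_gr_iff) (auto simp: lessThan_empty_iff)
  have c0le: "c0 \<le> cf k" if "k < T" for k unfolding c0_def using that by (intro Min_le) auto
  define nn where "nn = real (CARD('m))^2"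
  have nnpos: "nn > 0" by (simp add: nn_def)
  define K where "K = c0 / (eps * nn)"
  have Kpos: "K > 0" unfolding K_def using c0pos eps nnpos by simp
  define M' where "M' = max M 0"
  define r where "r = (exp (2 * M' / eps) - 1) / K"
  show "\<exists>r. \<forall>Srho :: nat \<Rightarrow> real^'m^'m.
           (\<forall>k<T. psd (Srho k)) \<longrightarrow> (\<exists>k<T. norm (Srho k) \<ge> r) \<longrightarrow>
           J_check T eps A B R Sw F Sx Srho \<ge> M"
  proof (intro exI[of _ r] allI impI)
    fix Srho :: "nat \<Rightarrow> real^'m^'m"
    assume Sr: "\<forall>k<T. psd (Srho k)" and "\<exists>k<T. norm (Srho k) \<ge> r"
    then obtain k0 where k0: "k0 < T" "norm (Srho k0) \<ge> r" by blast
    let ?P = "Pi_mat T eps A B R F Srho"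
    have Ppsd: "psd (?P j)" for j
      unfolding Pi_mat_def
      by (rule Pi_aux_psd[OF eps T Rpd]) (use Sr posdef_psd[OF Fpd] in auto)
    define L where "L k = eps * ln (det (Srho k + Sigma_Q T eps A B R F Srho k)
                            / det (Sigma_Q T eps A B R F Srho k))" for k
    have Lbound: "eps * ln (1 + cf k * trace (Srho k) / eps) \<le> L k" if k: "k < T" for k
    proof -
      define N where "N = R k + transpose (B k) ** ?P (Suc k) ** B k"
      have NT: "transpose N = N"
        using Rpd[OF k] psd_symm[OF Ppsd[of "Suc k"]]
        by (simp add: N_def transpose_add' matrix_transpose_mul posdef_def matrix_mul_assoc)
      have lb: "cf k * (x \<bullet> x) \<le> x \<bullet> (N *v x)" for x
      proof -
        have "x \<bullet> (N *v x) = x \<bullet> (R k *v x) + x \<bullet> ((transpose (B k) ** ?P (Suc k) ** B k) *v x)"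
          by (simp add: N_def matrix_vector_mult_add_rdistrib inner_add_right)
        moreover have "0 \<le> x \<bullet> ((transpose (B k) ** ?P (Suc k) ** B k) *v x)"
          by (rule psd_qf[OF psd_congr[OF Ppsd]])
        moreover have "cf k * (x \<bullet> x) \<le> x \<bullet> (R k *v x)" using cf[OF k] by blast
        ultimately show ?thesis by linarith
      qed
      have rat: "1 + cf k * trace (Srho k) / eps \<le> det (Srho k + Sigma_Q T eps A B R F Srho k)
                            / det (Sigma_Q T eps A B R F Srho k)"
        unfolding Sigma_Q_def N_def[symmetric]
        by (rule logdet_lb[OF eps _ NT _ lb]) (use Sr k cf in auto)
      have "0 \<le> cf k * trace (Srho k) / eps"
        using cf[OF k] psd_trace_nonneg[of "Srho k"] Sr k eps by simp
      then have "0 < 1 + cf k * trace (Srho k) / eps" by linarith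
      then have "ln (1 + cf k * trace (Srho k) / eps) \<le> ln (det (Srho k + Sigma_Q T eps A B R F Srho k)
                            / det (Sigma_Q T eps A B R F Srho k))"
        using rat by (subst ln_le_cancel_iff) auto
      then show ?thesis unfolding L_def using eps by simp
    qed
    have Lnn: "0 \<le> L k" if k: "k < T" for k
    proof -
      have "0 \<le> cf k * trace (Srho k) / eps"
        using cf[OF k] psd_trace_nonneg[of "Srho k"] Sr k eps by simp
      then have "0 \<le> ln (1 + cf k * trace (Srho k) / eps)" by simp
      then show ?thesis using Lbound[OF k] eps by (meson mult_nonneg_nonneg less_imp_le order_trans)
    qed
    have trnn: "0 \<le> trace (?P (Suc k) ** Sw k)" if k: "k < T" for k
      using trace_psd_mult[OF Ppsd posdef_psd[OF Swpd[OF k]]] .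
    have tr0: "0 \<le> trace (?P 0 ** Sx)" using trace_psd_mult[OF Ppsd posdef_psd[OF Sxpd]] .
    have Lk0: "2 * M' \<le> L k0"
    proof -
      have "norm (Srho k0) \<le> nn * trace (Srho k0)"
        unfolding nn_def by (rule psd_norm_le_trace) (use Sr k0 in auto)
      then have "r \<le> nn * trace (Srho k0)" using k0 by linarith
      then have "K * r \<le> K * (nn * trace (Srho k0))" using Kpos by simp
      also have "K * (nn * trace (Srho k0)) = c0 * trace (Srho k0) / eps"
        unfolding K_def using nnpos eps by simp
      also have "\<dots> \<le> cf k0 * trace (Srho k0) / eps"
        using c0le[OF k0(1)] psd_trace_nonneg[of "Srho k0"] Sr k0 eps
        by (intro divide_right_mono mult_right_mono) auto
      finally have "K * r \<le> cf k0 * trace (Srho k0) / eps" .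
      moreover have "K * r = exp (2 * M' / eps) - 1" unfolding r_def using Kpos by simp
      ultimately have "exp (2 * M' / eps) \<le> 1 + cf k0 * trace (Srho k0) / eps" by linarith
      then have "2 * M' / eps \<le> ln (1 + cf k0 * trace (Srho k0) / eps)"
        by (metis exp_gt_zero exp_le_cancel_iff exp_ln less_le_trans)
      then have "2 * M' \<le> eps * ln (1 + cf k0 * trace (Srho k0) / eps)"
        using eps by (simp add: divide_le_eq mult.commute)
      then show ?thesis using Lbound[OF k0(1)] by linarith
    qed
    have "L k0 \<le> L k0 + trace (?P (Suc k0) ** Sw k0)" using trnn[OF k0(1)] by simp
    also have "\<dots> \<le> (\<Sum>k<T. L k + trace (?P (Suc k) ** Sw k))"
      by (rule member_le_sum[where f = "\<lambda>k. L k + trace (?P (Suc k) ** Sw k)"])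
        (use k0 Lnn trnn in \<open>auto intro: add_nonneg_nonneg\<close>)
    finally have "L k0 \<le> (\<Sum>k<T. L k + trace (?P (Suc k) ** Sw k))" .
    then have "2 * M' \<le> trace (?P 0 ** Sx) + (\<Sum>k<T. L k + trace (?P (Suc k) ** Sw k))"
      using Lk0 tr0 by linarith
    moreover have "J_check T eps A B R Sw F Sx Srho
        = (1/2) * (trace (?P 0 ** Sx) + (\<Sum>k<T. L k + trace (?P (Suc k) ** Sw k)))"
      unfolding J_check_def L_def by simp
    ultimately have "M' \<le> J_check T eps A B R Sw F Sx Srho" by simp
    then show "M \<le> J_check T eps A B R Sw F Sx Srho" unfolding M'_def by simp
  qed
qed

end
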